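(* Let $\mathbb{Z}$ be a finite-dimensional Euclidean space, $L>0$, $\beta_k\in(0,1)$, $\eta_k=(1-\beta_k)/L$, $z^0,\tilde z^0,\tilde z^1,\dots\in\mathbb{Z}$, and $z^{k+1}=\beta_kz^0+(1-\beta_k)z^k-\eta_k\tilde z^k$ for $k\ge0$. Then for all $k\ge0$: (1) $z^{k+1}-z^k=\beta_k(z^0-z^k)-\frac{1-\beta_k}{L}\tilde z^k$; (2) $z^{k+1}-z^k=\frac{\beta_k}{1-\beta_k}(z^0-z^{k+1})-\frac1L\tilde z^k$; (3) $z^{k+1}-z^k=-\frac{1-\beta_k}{L}\tilde z^k+\sum_{i=0}^{k-1}\frac{\beta_k}{L}\Big(\prod_{j=i}^{k-1}(1-\beta_j)\Big)\tilde z^i$. Moreover, if $\beta_k=1/(k+2)$, then $\|z^1-z^0\|^2\le\frac1{4L^2}\|\tilde z^0\|^2$ and for $k\ge1$, \[\|z^{k+1}-z^k\|^2\le\frac{2(k+1)^2}{L^2(k+2)^2}\|\tilde z^k\|^2+\frac{2k}{L^2(k+1)^2(k+2)^2}\sum_{i=0}^{k-1}(i+1)^2\|\tilde z^i\|^2.\] *)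

theory Defs
  imports "HOL-Analysis.Analysis"
begin

end

theory Submission
  imports Defs
begin

lemma dform:
  fixes z zt :: "nat \<Rightarrow> 'a::euclidean_space"
    and beta eta :: "nat \<Rightarrow> real"
  assumes eta_def: "\<And>k. eta k = (1 - beta k) / L"
    and rec: "\<And>k. z (Suc k) = beta k *\<^sub>R z 0 + (1 - beta k) *\<^sub>R z k - eta k *\<^sub>R zt k"
  shows "z k - z 0 = - (\<Sum>i<k. ((1/L) * (\<Prod>j\<in>{i..<k}. (1 - beta j))) *\<^sub>R zt i)"
proof (induction k)
  case 0
  then show ?case by simp
next
  case (Suc k)
  have "z (Suc k) - z 0 = (1 - beta k) *\<^sub>R (z k - z 0) - eta k *\<^sub>R zt k"
    using rec[of k] by (simp add: algebra_simps)
  also have "\<dots> = - (\<Sum>i<k. ((1 - beta k) * ((1/L) * (\<Prod>j\<in>{i..<k}. (1 - beta j)))) *\<^sub>R zt i)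
       - eta k *\<^sub>R zt k"
    by (simp add: Suc scaleR_sum_right)
  also have "(\<Sum>i<k. ((1 - beta k) * ((1/L) * (\<Prod>j\<in>{i..<k}. (1 - beta j)))) *\<^sub>R zt i)
     = (\<Sum>i<k. ((1/L) * (\<Prod>j\<in>{i..<Suc k}. (1 - beta j))) *\<^sub>R zt i)"
    by (rule sum.cong) (auto simp: prod.atLeastLessThan_Suc)
  also have "eta k *\<^sub>R zt k = ((1/L) * (\<Prod>j\<in>{k..<Suc k}. (1 - beta j))) *\<^sub>R zt k"
    using eta_def[of k] by simp
  finally show ?case by simp
qed

lemma prodb:
  assumes "i \<le> k"
  shows "(\<Prod>j\<in>{i..<k}. (1 - 1 / (real j + 2))) = (real i + 1) / (real k + 1)"
  using assms
proof (induction k rule: dec_induct)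
  case base
  then show ?case by simp
next
  case (step n)
  have "(\<Prod>j\<in>{i..<Suc n}. (1 - 1 / (real j + 2))) = (real i + 1) / (real n + 1) * (1 - 1 / (real n + 2))"
    using step by (simp add: prod.atLeastLessThan_Suc)
  also have "(1 - 1 / (real n + 2)) = (real n + 1) / (real n + 2)"
    by (simp add: field_simps)
  also have "(real i + 1) / (real n + 1) * ((real n + 1) / (real n + 2)) = (real i + 1) / (real (Suc n) + 1)"
    by (simp add: add.commute)
  finally show ?case .
qed

theorem lemma14:
  fixes z zt :: "nat \<Rightarrow> 'a::euclidean_space"
    and beta eta :: "nat \<Rightarrow> real"
    and L :: real
  assumes L_pos: "L > 0"
    and beta_range: "\<And>k. 0 < beta k \<and> beta k < 1"
    and eta_def: "\<And>k. eta k = (1 - beta k) / L"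
    and rec: "\<And>k. z (Suc k) = beta k *\<^sub>R z 0 + (1 - beta k) *\<^sub>R z k - eta k *\<^sub>R zt k"
  shows "(\<forall>k. z (Suc k) - z k = beta k *\<^sub>R (z 0 - z k) - ((1 - beta k) / L) *\<^sub>R zt k
             \<and> z (Suc k) - z k = (beta k / (1 - beta k)) *\<^sub>R (z 0 - z (Suc k)) - (1 / L) *\<^sub>R zt k
             \<and> z (Suc k) - z k = - (((1 - beta k) / L) *\<^sub>R zt k)
                 + (\<Sum>i<k. ((beta k / L) * (\<Prod>j=i..k-1. (1 - beta j))) *\<^sub>R zt i))
       \<and> ((\<forall>k. beta k = 1 / (real k + 2)) \<longrightarrow>
            (norm (z 1 - z 0))^2 \<le> 1 / (4 * L^2) * (norm (zt 0))^2
          \<and> (\<forall>k\<ge>1. (norm (z (Suc k) - z k))^2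
                \<le> 2 * (real k + 1)^2 / (L^2 * (real k + 2)^2) * (norm (zt k))^2
                  + 2 * real k / (L^2 * (real k + 1)^2 * (real k + 2)^2)
                    * (\<Sum>i<k. (real i + 1)^2 * (norm (zt i))^2)))"
proof -
  have P1: "z (Suc k) - z k = beta k *\<^sub>R (z 0 - z k) - ((1 - beta k) / L) *\<^sub>R zt k" for k
    using rec[of k] eta_def[of k] by (simp add: algebra_simps)
  have P2: "z (Suc k) - z k = (beta k / (1 - beta k)) *\<^sub>R (z 0 - z (Suc k)) - (1 / L) *\<^sub>R zt k" for k
  proof -
    have ne: "1 - beta k \<noteq> 0" using beta_range[of k] by simp
    have e1: "z 0 - z (Suc k) = (1 - beta k) *\<^sub>R (z 0 - z k) + ((1 - beta k) / L) *\<^sub>R zt k"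
      using rec[of k] eta_def[of k] by (simp add: algebra_simps)
    have "(beta k / (1 - beta k)) *\<^sub>R (z 0 - z (Suc k))
        = (beta k / (1 - beta k) * (1 - beta k)) *\<^sub>R (z 0 - z k) + (beta k / (1 - beta k) * ((1 - beta k) / L)) *\<^sub>R zt k"
      unfolding e1 by (simp add: scaleR_add_right)
    also have "beta k / (1 - beta k) * (1 - beta k) = beta k" using ne by simp
    also have "beta k / (1 - beta k) * ((1 - beta k) / L) = beta k / L" using ne by simp
    finally have e2: "(beta k / (1 - beta k)) *\<^sub>R (z 0 - z (Suc k)) = beta k *\<^sub>R (z 0 - z k) + (beta k / L) *\<^sub>R zt k" .
    have e3: "((1 - beta k) / L) *\<^sub>R zt k = (1 / L) *\<^sub>R zt k - (beta k / L) *\<^sub>R zt k"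
      by (simp add: diff_divide_distrib scaleR_diff_left)
    have "beta k *\<^sub>R (z 0 - z k) + (beta k / L) *\<^sub>R zt k - (1 / L) *\<^sub>R zt k
        = beta k *\<^sub>R (z 0 - z k) - ((1 - beta k) / L) *\<^sub>R zt k"
      unfolding e3 by (simp add: algebra_simps)
    then show ?thesis using P1[of k] e2 by simp
  qed
  have P3': "z (Suc k) - z k = - (((1 - beta k) / L) *\<^sub>R zt k)
                 + (\<Sum>i<k. ((beta k / L) * (\<Prod>j\<in>{i..<k}. (1 - beta j))) *\<^sub>R zt i)" for k
  proof -
    have "z (Suc k) - z k = - (beta k *\<^sub>R (z k - z 0)) - ((1 - beta k) / L) *\<^sub>R zt k"
      using P1[of k] by (simp add: algebra_simps)
    also have "beta k *\<^sub>R (z k - z 0) = - (\<Sum>i<k. ((beta k / L) * (\<Prod>j\<in>{i..<k}. (1 - beta j))) *\<^sub>R zt i)"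
      by (simp add: dform[OF eta_def rec, of k] scaleR_sum_right)
    finally show ?thesis by simp
  qed
  have P3: "z (Suc k) - z k = - (((1 - beta k) / L) *\<^sub>R zt k)
                 + (\<Sum>i<k. ((beta k / L) * (\<Prod>j=i..k-1. (1 - beta j))) *\<^sub>R zt i)" for k
  proof -
    have "(\<Sum>i<k. ((beta k / L) * (\<Prod>j=i..k-1. (1 - beta j))) *\<^sub>R zt i)
        = (\<Sum>i<k. ((beta k / L) * (\<Prod>j\<in>{i..<k}. (1 - beta j))) *\<^sub>R zt i)"
    proof (rule sum.cong)
      fix i assume "i \<in> {..<k}"
      then have "{i..k-1} = {i..<k}" by auto
      then show "((beta k / L) * (\<Prod>j=i..k-1. (1 - beta j))) *\<^sub>R zt i
          = ((beta k / L) * (\<Prod>j\<in>{i..<k}. (1 - beta j))) *\<^sub>R zt i" by simp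
    qed simp
    then show ?thesis using P3' by simp
  qed
  have Q: "(norm (z 1 - z 0))^2 \<le> 1 / (4 * L^2) * (norm (zt 0))^2
          \<and> (\<forall>k\<ge>1. (norm (z (Suc k) - z k))^2
                \<le> 2 * (real k + 1)^2 / (L^2 * (real k + 2)^2) * (norm (zt k))^2
                  + 2 * real k / (L^2 * (real k + 1)^2 * (real k + 2)^2)
                    * (\<Sum>i<k. (real i + 1)^2 * (norm (zt i))^2))"
    if B: "\<forall>k. beta k = 1 / (real k + 2)"
  proof
    have "z 1 - z 0 = - ((1 / (2 * L)) *\<^sub>R zt 0)"
      using P3'[of 0] B by simp
    then have "norm (z 1 - z 0) = norm (zt 0) / (2 * L)"
      using L_pos by simp
    then show "(norm (z 1 - z 0))^2 \<le> 1 / (4 * L^2) * (norm (zt 0))^2"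
      by (simp add: power_divide power_mult_distrib)
  next
    show "\<forall>k\<ge>1. (norm (z (Suc k) - z k))^2
                \<le> 2 * (real k + 1)^2 / (L^2 * (real k + 2)^2) * (norm (zt k))^2
                  + 2 * real k / (L^2 * (real k + 1)^2 * (real k + 2)^2)
                    * (\<Sum>i<k. (real i + 1)^2 * (norm (zt i))^2)"
    proof (intro allI impI)
      fix k :: nat assume "k \<ge> 1"
      define c where "c i = (real i + 1) / (L * (real k + 1) * (real k + 2))" for i
      define a where "a = - (((real k + 1) / ((real k + 2) * L)) *\<^sub>R zt k)"
      define b where "b = (\<Sum>i<k. c i *\<^sub>R zt i)"
      have c_nn: "c i \<ge> 0" for i using L_pos by (simp add: c_def)
      have eq: "z (Suc k) - z k = a + b"
      proof -
        have "(\<Sum>i<k. ((beta k / L) * (\<Prod>j\<in>{i..<k}. (1 - beta j))) *\<^sub>R zt i) = b"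
          unfolding b_def
        proof (rule sum.cong)
          fix i assume "i \<in> {..<k}"
          then have hp: "(\<Prod>j\<in>{i..<k}. (1 - beta j)) = (real i + 1) / (real k + 1)"
            using prodb[of i k] B by simp
          have bk: "beta k = 1 / (real k + 2)" using B by simp
          have "(beta k / L) * (\<Prod>j\<in>{i..<k}. (1 - beta j)) = (1 / (real k + 2)) / L * ((real i + 1) / (real k + 1))"
            by (simp only: hp bk)
          also have "\<dots> = c i" by (simp add: c_def field_simps)
          finally show "((beta k / L) * (\<Prod>j\<in>{i..<k}. (1 - beta j))) *\<^sub>R zt i = c i *\<^sub>R zt i"
            by simp
        qed simp
        moreover have "((1 - beta k) / L) = (real k + 1) / ((real k + 2) * L)"
        proof -
          have bk: "beta k = 1 / (real k + 2)" using B by simp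
          show ?thesis unfolding bk by (simp add: field_simps)
        qed
        ultimately show ?thesis using P3'[of k] by (simp add: a_def)
      qed
      have na: "(norm a)^2 = (real k + 1)^2 / (L^2 * (real k + 2)^2) * (norm (zt k))^2"
        using L_pos by (simp add: a_def power_mult_distrib power_divide abs_of_pos)
      have nb1: "norm b \<le> (\<Sum>i<k. c i * norm (zt i))"
        unfolding b_def using norm_sum[of "\<lambda>i. c i *\<^sub>R zt i" "{..<k}"] c_nn by simp
      have "(norm b)^2 \<le> (\<Sum>i<k. c i * norm (zt i))^2"
        using nb1 by (simp add: power_mono)
      also have "\<dots> \<le> (\<Sum>i<k. (c i * norm (zt i))^2) * real k"
        using sum_squared_le_sum_of_squares[of "\<lambda>i. c i * norm (zt i)" "{..<k}"] by simp
      also have "(\<Sum>i<k. (c i * norm (zt i))^2)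
          = 1 / (L^2 * (real k + 1)^2 * (real k + 2)^2) * (\<Sum>i<k. (real i + 1)^2 * (norm (zt i))^2)"
        by (simp add: sum_distrib_left c_def power_mult_distrib power_divide)
      finally have nb: "(norm b)^2 \<le> real k / (L^2 * (real k + 1)^2 * (real k + 2)^2) * (\<Sum>i<k. (real i + 1)^2 * (norm (zt i))^2)"
        by (simp add: mult.commute)
      have "(norm (a + b))^2 \<le> (norm a + norm b)^2"
        by (simp add: power_mono norm_triangle_ineq)
      also have "\<dots> \<le> 2 * (norm a)^2 + 2 * (norm b)^2"
      proof -
        have "0 \<le> (norm a - norm b)^2" by simp
        then show ?thesis by (simp add: power2_eq_square algebra_simps)
      qed
      finally show "(norm (z (Suc k) - z k))^2
                \<le> 2 * (real k + 1)^2 / (L^2 * (real k + 2)^2) * (norm (zt k))^2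
                  + 2 * real k / (L^2 * (real k + 1)^2 * (real k + 2)^2)
                    * (\<Sum>i<k. (real i + 1)^2 * (norm (zt i))^2)"
        using eq na nb by simp
    qed
  qed
  show ?thesis using P1 P2 P3 Q by blast
qed

end
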